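(* Let $G$ be a finite nilpotent group and let $V=\{1,v_1,v_2,v_3\}$ be a four-group acting on $G$ by automorphisms with $C_G(V)=1$. Put $G_i=C_G(v_i)$ for $i=1,2,3$. For $x\in G_i$ and $y\in G_j$ with $i\neq j$, let $k$ be such that $\{i,j,k\}=\{1,2,3\}$ and define $x*y=s$, where $(s,t)\in G_k\times G_j$ is the unique pair with $y^x=sts$. Define $R_1=\langle a*b : a\in G_2,b\in G_3\rangle$, $R_2=\langle a*b : a\in G_1,b\in G_3\rangle$, $R_3=\langle a*b : a\in G_1,b\in G_2\rangle$. Then $G_i\cap G'=R_i$ for $i=1,2,3$.
   Context: $G'$ is the derived subgroup of $G$. It is known that under these hypotheses $G$ has odd order, each $G_i$ is abelian, and for $x\in G_i$, $y\in G_j$ with $i\ne j$ the element $y^x$ is inverted by $v_i$, so there is a unique pair $(s,t)\in G_k\times G_j$ with $y^x=sts$; hence $x*y$ is well defined. *)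

theory Defs
  imports "HOL-Algebra.Algebra"
begin

text \<open>Lower central series: gamma_0 = G, gamma_(n+1) = [gamma_n, G].\<close>
definition lower_central :: "('a, 'b) monoid_scheme \<Rightarrow> nat \<Rightarrow> 'a set" where
  "lower_central G n =
     ((\<lambda>H. generate G (\<Union>h \<in> H. \<Union>g \<in> carrier G.
              { h \<otimes>\<^bsub>G\<^esub> g \<otimes>\<^bsub>G\<^esub> inv\<^bsub>G\<^esub> h \<otimes>\<^bsub>G\<^esub> inv\<^bsub>G\<^esub> g })) ^^ n) (carrier G)"

definition nilpotent_group :: "('a, 'b) monoid_scheme \<Rightarrow> bool" where
  "nilpotent_group G \<longleftrightarrow> group G \<and> (\<exists>n. lower_central G n = {\<one>\<^bsub>G\<^esub>})"

definition fixpts :: "('a, 'b) monoid_scheme \<Rightarrow> ('a \<Rightarrow> 'a) \<Rightarrow> 'a set" where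
  "fixpts G v = {g \<in> carrier G. v g = g}"

definition four_group_action ::
  "('a, 'b) monoid_scheme \<Rightarrow> ('a \<Rightarrow> 'a) \<Rightarrow> ('a \<Rightarrow> 'a) \<Rightarrow> ('a \<Rightarrow> 'a) \<Rightarrow> bool" where
  "four_group_action G v1 v2 v3 \<longleftrightarrow>
     v1 \<in> iso G G \<and> v2 \<in> iso G G \<and> v3 \<in> iso G G \<and>
     (\<forall>g \<in> carrier G. v1 (v1 g) = g \<and> v2 (v2 g) = g \<and> v3 (v3 g) = g \<and> v1 (v2 g) = v3 g)"

definition star :: "('a, 'b) monoid_scheme \<Rightarrow> 'a set \<Rightarrow> 'a set \<Rightarrow> 'a \<Rightarrow> 'a \<Rightarrow> 'a" where
  "star G Gk Gj x y = (THE s. \<exists>t. s \<in> Gk \<and> t \<in> Gj \<and>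
      inv\<^bsub>G\<^esub> x \<otimes>\<^bsub>G\<^esub> y \<otimes>\<^bsub>G\<^esub> x = s \<otimes>\<^bsub>G\<^esub> t \<otimes>\<^bsub>G\<^esub> s)"

end

theory Submission
  imports Defs
begin


lemma involution_parity:
  assumes "finite A" "\<And>x. x \<in> A \<Longrightarrow> f x \<in> A" "\<And>x. x \<in> A \<Longrightarrow> f (f x) = x"
  shows "even (card A) = even (card {x\<in>A. f x = x})"
  using assms
proof (induction "card A" arbitrary: A rule: less_induct)
  case less
  note fin = less.prems(1) and cl = less.prems(2) and inv = less.prems(3)
  show ?case
  proof (cases "\<exists>x\<in>A. f x \<noteq> x")
    case False
    then have "{x\<in>A. f x = x} = A" by auto
    then show ?thesis by simp
  next
    case True
    then obtain x where x: "x \<in> A" "f x \<noteq> x" by auto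
    let ?B = "A - {x, f x}"
    have fx: "f x \<in> A" using cl x by blast
    have cB: "card A = card ?B + 2"
    proof -
      have "card {x, f x} = 2" using x by simp
      moreover have "{x, f x} \<subseteq> A" using x fx by simp
      ultimately show ?thesis using fin card_Diff_subset[of "{x, f x}" A] card_mono[OF fin, of "{x, f x}"] by simp
    qed
    have IH: "even (card ?B) = even (card {y\<in>?B. f y = y})"
    proof (rule less.hyps)
      show "card ?B < card A" using cB by simp
      show "finite ?B" using fin by simp
      show "\<And>y. y \<in> ?B \<Longrightarrow> f y \<in> ?B"
      proof -
        fix y assume y: "y \<in> ?B"
        have "f y \<noteq> x" using y inv x(1) by (metis DiffD1 DiffD2 insertCI)
        moreover have "f y \<noteq> f x" using y inv x(1) by (metis DiffD1 DiffD2 insertCI)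
        ultimately show "f y \<in> ?B" using y cl by blast
      qed
      show "\<And>y. y \<in> ?B \<Longrightarrow> f (f y) = y" using inv by blast
    qed
    have "{y\<in>?B. f y = y} = {y\<in>A. f y = y}" using x inv by auto
    then show ?thesis using IH cB by simp
  qed
qed




lemma (in group) sub_pow_closed:
  assumes "subgroup H G" "x \<in> H" shows "x [^] (n::nat) \<in> H"
  by (induction n) (use assms in \<open>auto simp: subgroup.one_closed subgroup.m_closed\<close>)

lemma (in group) hom_gh: "f \<in> hom G G \<Longrightarrow> group_hom G G f"
  by (simp add: group_hom_axioms.intro group_hom_def is_group)

lemma (in group) fixpts_subgroup: assumes "f \<in> hom G G" shows "subgroup (fixpts G f) G"
proof -
  interpret h: group_hom G G f using hom_gh[OF assms] .
  show ?thesis by (rule subgroupI) (auto simp: fixpts_def)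
qed

locale fg = group G for G (structure) +
  fixes p q r :: "'a \<Rightarrow> 'a"
  assumes fin: "finite (carrier G)"
  and hp: "p \<in> hom G G" and hq: "q \<in> hom G G" and hr: "r \<in> hom G G"
  and pp: "\<And>x. x \<in> carrier G \<Longrightarrow> p (p x) = x"
  and qq: "\<And>x. x \<in> carrier G \<Longrightarrow> q (q x) = x"
  and rr: "\<And>x. x \<in> carrier G \<Longrightarrow> r (r x) = x"
  and pq: "\<And>x. x \<in> carrier G \<Longrightarrow> p (q x) = r x"
  and qp: "\<And>x. x \<in> carrier G \<Longrightarrow> q (p x) = r x"
  and pr: "\<And>x. x \<in> carrier G \<Longrightarrow> p (r x) = q x"
  and rp: "\<And>x. x \<in> carrier G \<Longrightarrow> r (p x) = q x"
  and qr: "\<And>x. x \<in> carrier G \<Longrightarrow> q (r x) = p x"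
  and rq: "\<And>x. x \<in> carrier G \<Longrightarrow> r (q x) = p x"
  and fpf: "\<And>x. x \<in> carrier G \<Longrightarrow> p x = x \<Longrightarrow> q x = x \<Longrightarrow> x = \<one>"
begin

lemma perm_qpr: "fg G q p r"
  by (unfold_locales) (auto simp: fin hp hq hr pp qq rr pq qp pr rp qr rq fpf)
lemma perm_prq: "fg G p r q"
proof (unfold_locales)
  fix x assume "x \<in> carrier G" "p x = x" "r x = x"
  then have "q x = x" using pr by metis
  then show "x = \<one>" using fpf \<open>x \<in> carrier G\<close> \<open>p x = x\<close> by blast
qed (auto simp: fin hp hq hr pp qq rr pq qp pr rp qr rq)
lemma perm_rqp: "fg G r q p"
proof (unfold_locales)
  fix x assume "x \<in> carrier G" "r x = x" "q x = x"
  then have "p x = x" using qr by metis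
  then show "x = \<one>" using fpf \<open>x \<in> carrier G\<close> \<open>q x = x\<close> by blast
qed (auto simp: fin hp hq hr pp qq rr pq qp pr rp qr rq)

interpretation P: group_hom G G p using hom_gh[OF hp] .
interpretation Q: group_hom G G q using hom_gh[OF hq] .
interpretation R: group_hom G G r using hom_gh[OF hr] .

lemma odd_order: "odd (order G)"
proof -
  have "even (card (carrier G)) = even (card {x\<in>carrier G. p x = x})"
    by (rule involution_parity) (auto simp: fin pp)
  moreover have "even (card (fixpts G p)) = even (card {x\<in>fixpts G p. q x = x})"
  proof (rule involution_parity)
    show "finite (fixpts G p)" using fin by (simp add: fixpts_def)
    show "\<And>x. x \<in> fixpts G p \<Longrightarrow> q x \<in> fixpts G p" by (auto simp: fixpts_def pq) (metis rp)
    show "\<And>x. x \<in> fixpts G p \<Longrightarrow> q (q x) = x" by (auto simp: fixpts_def qq)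
  qed
  moreover have "{x\<in>fixpts G p. q x = x} = {\<one>}" using fpf by (auto simp: fixpts_def)
  ultimately show ?thesis by (simp add: order_def fixpts_def)
qed

definition m where "m = (order G + 1) div 2"

lemma two_m: "m + m = order G + 1" using odd_order unfolding m_def by presburger

lemma pow_m_sq: "x \<in> carrier G \<Longrightarrow> (x [^] m) \<otimes> (x [^] m) = x"
proof -
  assume x: "x \<in> carrier G"
  have "(x [^] m) \<otimes> (x [^] m) = x [^] (order G + 1)" using two_m nat_pow_mult[OF x] by simp
  also have "\<dots> = x" using pow_order_eq_1[OF x] x by simp
  finally show ?thesis .
qed


lemma sq_pow_m: "x \<in> carrier G \<Longrightarrow> (x \<otimes> x) [^] m = x"
proof -
  assume x: "x \<in> carrier G"
  have "x \<otimes> x = x [^] (2::nat)" using x by (simp add: numeral_2_eq_2)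
  then have "(x \<otimes> x) [^] m = x [^] (m + m)" using x by (simp add: nat_pow_pow mult_2)
  also have "\<dots> = x" using pow_m_sq[OF x] nat_pow_mult[OF x] by simp
  finally show ?thesis .
qed

lemma sq_in_sub: "subgroup H G \<Longrightarrow> x \<in> carrier G \<Longrightarrow> x \<otimes> x \<in> H \<Longrightarrow> x \<in> H"
  using sub_pow_closed sq_pow_m by metis

lemma sq_inj: "x \<in> carrier G \<Longrightarrow> y \<in> carrier G \<Longrightarrow> x \<otimes> x = y \<otimes> y \<Longrightarrow> x = y"
  using sq_pow_m by metis

lemma fix_closed: "x \<in> fixpts G f \<Longrightarrow> x \<in> carrier G" by (simp add: fixpts_def)

lemma inverts: assumes y: "y \<in> fixpts G r" shows "p y = inv y"
proof -
  let ?A = "fixpts G r"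
  let ?phi = "\<lambda>h. inv h \<otimes> p h"
  have A: "?A \<subseteq> carrier G" by (auto simp: fixpts_def)
  have maps: "?phi ` ?A \<subseteq> ?A"
  proof
    fix z assume "z \<in> ?phi ` ?A"
    then obtain h where h: "h \<in> ?A" "z = ?phi h" by auto
    have hc: "h \<in> carrier G" using h by (simp add: fixpts_def)
    have "r z = inv (r h) \<otimes> r (p h)" using h hc by simp
    also have "r (p h) = p (r h)" using rp pr hc by simp
    finally show "z \<in> ?A" using h hc by (simp add: fixpts_def)
  qed
  have inj: "inj_on ?phi ?A"
  proof
    fix h k assume h: "h \<in> ?A" and k: "k \<in> ?A" and e: "?phi h = ?phi k"
    have hc: "h \<in> carrier G" and kc: "k \<in> carrier G" using h k by (auto simp: fixpts_def)
    let ?z = "k \<otimes> inv h"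
    have zc: "?z \<in> carrier G" using hc kc by simp
    have "p ?z = p k \<otimes> inv (p h)" using hc kc by simp
    also have "\<dots> = k \<otimes> inv h"
    proof -
      have "k \<otimes> (inv h \<otimes> p h) \<otimes> inv (p h) = k \<otimes> inv h" using hc kc by (simp add: m_assoc)
      moreover have "k \<otimes> (inv k \<otimes> p k) \<otimes> inv (p h) = p k \<otimes> inv (p h)" using hc kc by (simp add: m_assoc[symmetric])
      ultimately show ?thesis using e by simp
    qed
    finally have pz: "p ?z = ?z" .
    have rz: "r ?z = ?z" using h k hc kc by (simp add: fixpts_def)
    have "q ?z = ?z" using pz rz pr zc by metis
    then have "?z = \<one>" using fpf zc pz by blast
    then show "h = k" using hc kc by (metis inv_equality inv_inv r_inv_ex) 
  qed
  have "?phi ` ?A = ?A" using endo_inj_surj[OF _ maps inj] fin A finite_subset by blast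
  then obtain h where h: "h \<in> ?A" "y = ?phi h" using y by force
  have hc: "h \<in> carrier G" using h by (simp add: fixpts_def)
  show ?thesis using h hc by (simp add: pp inv_mult_group)
qed

lemma fix_comm: assumes x: "x \<in> fixpts G r" and y: "y \<in> fixpts G r" shows "x \<otimes> y = y \<otimes> x"
proof -
  have xc: "x \<in> carrier G" and yc: "y \<in> carrier G" using x y by (auto simp: fixpts_def)
  have xy: "x \<otimes> y \<in> fixpts G r" using x y xc yc by (simp add: fixpts_def)
  have "inv (x \<otimes> y) = p (x \<otimes> y)" using inverts[OF xy] by simp
  also have "\<dots> = inv x \<otimes> inv y" using inverts[OF x] inverts[OF y] xc yc by simp
  finally have "inv y \<otimes> inv x = inv x \<otimes> inv y" using xc yc by (simp add: inv_mult_group)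
  then have "inv (inv y \<otimes> inv x) = inv (inv x \<otimes> inv y)" by simp
  then show ?thesis using xc yc by (simp add: inv_mult_group)
qed

end



lemma (in group) ic1 [simp]: "x \<in> carrier G \<Longrightarrow> y \<in> carrier G \<Longrightarrow> inv x \<otimes> (x \<otimes> y) = y"
  by (simp add: m_assoc[symmetric])
lemma (in group) ic2 [simp]: "x \<in> carrier G \<Longrightarrow> y \<in> carrier G \<Longrightarrow> x \<otimes> (inv x \<otimes> y) = y"
  by (simp add: m_assoc[symmetric])

context fg begin

interpretation P: group_hom G G p using hom_gh[OF hp] .
interpretation Q: group_hom G G q using hom_gh[OF hq] .
interpretation R: group_hom G G r using hom_gh[OF hr] .

lemma q_inv_r: "y \<in> fixpts G r \<Longrightarrow> q y = inv y" using fg.inverts[OF perm_qpr] .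
lemma r_inv_q: "y \<in> fixpts G q \<Longrightarrow> r y = inv y" using fg.inverts[OF fg.perm_prq[OF perm_rqp]] .
lemma p_inv_q: "y \<in> fixpts G q \<Longrightarrow> p y = inv y" using fg.inverts[OF perm_prq] .
lemma q_comm: "x \<in> fixpts G q \<Longrightarrow> y \<in> fixpts G q \<Longrightarrow> x \<otimes> y = y \<otimes> x" using fg.fix_comm[OF perm_prq] .

lemma wXw: assumes w: "w \<in> carrier G" and z: "z \<in> carrier G" and e: "w \<otimes> z \<otimes> w = z"
  shows "w = \<one>"
proof -
  have e1: "z \<otimes> w = inv w \<otimes> z"
  proof -
    have "inv w \<otimes> (w \<otimes> z \<otimes> w) = inv w \<otimes> z" using e by simp
    then show ?thesis using w z by (simp add: m_assoc)
  qed
  have e2: "w \<otimes> z = z \<otimes> inv w"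
  proof -
    have "(w \<otimes> z \<otimes> w) \<otimes> inv w = z \<otimes> inv w" using e by simp
    then show ?thesis using w z by (simp add: m_assoc)
  qed
  have c: "w \<otimes> (z \<otimes> z) = (z \<otimes> z) \<otimes> w"
  proof -
    have "(z \<otimes> z) \<otimes> w = z \<otimes> (inv w \<otimes> z)" using e1 w z by (simp add: m_assoc)
    also have "\<dots> = (z \<otimes> inv w) \<otimes> z" using w z by (simp add: m_assoc)
    also have "\<dots> = w \<otimes> (z \<otimes> z)" by (subst e2[symmetric]) (use w z in \<open>simp_all add: m_assoc\<close>)
    finally show ?thesis by simp
  qed
  have "(z \<otimes> z) [^] m \<otimes> w = w \<otimes> (z \<otimes> z) [^] m"
    using group_commutes_pow[of "z \<otimes> z" w m] c w z by simp
  then have "z \<otimes> w = w \<otimes> z" using sq_pow_m[OF z] by simp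
  then have "inv w \<otimes> z = w \<otimes> z" using e1 by simp
  then have "inv w = w" using w z by simp
  then have "w \<otimes> w = \<one>" using w by (metis l_inv)
  then have "w \<otimes> w = \<one> \<otimes> \<one>" by simp
  then show ?thesis using sq_inj[OF w one_closed] by blast
qed

lemma sts_exists:
  assumes z: "z \<in> carrier G" and pX: "p z = inv z"
  and H: "subgroup H G" and zH: "z \<in> H" and qH: "\<And>x. x \<in> H \<Longrightarrow> q x \<in> H"
  shows "\<exists>s t. s \<in> fixpts G q \<and> t \<in> fixpts G r \<and> z = s \<otimes> t \<otimes> s \<and> s \<in> H \<and> t \<in> H"
proof -
  define Y where "Y = inv (q z)"
  have Yc: "Y \<in> carrier G" using z by (simp add: Y_def)
  have qX: "q z = inv Y" using z by (simp add: Y_def)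
  have qY: "q Y = inv z" using z by (simp add: Y_def qq)
  define Rr where "Rr = (z \<otimes> Y) [^] m"
  have Rc: "Rr \<in> carrier G" using z Yc by (simp add: Rr_def)
  have RR: "Rr \<otimes> Rr = z \<otimes> Y" using pow_m_sq z Yc by (simp add: Rr_def)
  have qR: "q Rr = inv Rr"
  proof -
    have "q (z \<otimes> Y) = inv (z \<otimes> Y)" using z Yc qX qY by (simp add: inv_mult_group)
    then show ?thesis using z Yc by (simp add: Rr_def Q.hom_nat_pow nat_pow_inv)
  qed
  have Xe: "z = Rr \<otimes> Rr \<otimes> inv Y" using RR z Yc Rc by (simp add: m_assoc)
  define u where "u = Rr \<otimes> inv Y"
  have uc: "u \<in> carrier G" using Rc Yc by (simp add: u_def)
  have qu: "q u = u"
  proof -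
    have "q u = inv Rr \<otimes> z" using Rc Yc qR qY z by (simp add: u_def)
    also have "\<dots> = u" using Xe Rc Yc by (simp add: u_def m_assoc)
    finally show ?thesis .
  qed
  have uYu: "u \<otimes> Y \<otimes> u = z" using Xe Rc Yc by (simp add: u_def m_assoc)
  define s where "s = u [^] m"
  have sc: "s \<in> carrier G" using uc by (simp add: s_def)
  have qs: "s \<in> fixpts G q" using uc qu sc by (simp add: s_def fixpts_def Q.hom_nat_pow)
  have ss: "s \<otimes> s = u" using pow_m_sq uc by (simp add: s_def)
  have rs: "r s = inv s" using r_inv_q[OF qs] .
  have rX: "r z = Y" using z pX by (metis qp Y_def Q.hom_inv)
  define t where "t = inv s \<otimes> z \<otimes> inv s"
  have tc: "t \<in> carrier G" using sc z by (simp add: t_def)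
  have rt: "r t = t"
  proof -
    have "r t = s \<otimes> Y \<otimes> s" using sc z rs rX by (simp add: t_def)
    also have "\<dots> = t"
    proof -
      have ze: "z = s \<otimes> s \<otimes> Y \<otimes> (s \<otimes> s)" using uYu ss by simp
      show ?thesis unfolding t_def ze using sc Yc by (simp add: m_assoc)
    qed
    finally show ?thesis .
  qed
  have "z = s \<otimes> t \<otimes> s" using sc z by (simp add: t_def m_assoc)
  moreover have sH: "s \<in> H"
  proof -
    have "Y \<in> H" using qH[OF zH] H by (simp add: Y_def subgroup.m_inv_closed)
    then have "Rr \<in> H" using zH H by (simp add: Rr_def sub_pow_closed subgroup.m_closed)
    then have "u \<in> H" using \<open>Y \<in> H\<close> H by (simp add: u_def subgroup.m_closed subgroup.m_inv_closed)
    then show ?thesis using H by (simp add: s_def sub_pow_closed)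
  qed
  moreover have "t \<in> H" using sH zH H by (simp add: t_def subgroup.m_closed subgroup.m_inv_closed)
  ultimately show ?thesis using qs rt tc by (auto simp: fixpts_def)
qed


lemma sts_aux: assumes s: "s \<in> fixpts G q" and t: "t \<in> fixpts G r"
  shows "s \<otimes> t \<otimes> s = (s \<otimes> s) \<otimes> inv (q (s \<otimes> t \<otimes> s)) \<otimes> (s \<otimes> s)"
proof -
  have sc: "s \<in> carrier G" and tc: "t \<in> carrier G" using s t by (auto simp: fixpts_def)
  have "q (s \<otimes> t \<otimes> s) = s \<otimes> inv t \<otimes> s" using s t sc tc q_inv_r[OF t] by (simp add: fixpts_def)
  then show ?thesis using sc tc by (simp add: m_assoc inv_mult_group)
qed

lemma sts_unique:
  assumes s: "s \<in> fixpts G q" and t: "t \<in> fixpts G r" and s': "s' \<in> fixpts G q" and t': "t' \<in> fixpts G r"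
  and e: "s \<otimes> t \<otimes> s = s' \<otimes> t' \<otimes> s'"
  shows "s = s'"
proof -
  have sc: "s \<in> carrier G" and tc: "t \<in> carrier G" and sc': "s' \<in> carrier G" and tc': "t' \<in> carrier G"
    using s t s' t' by (auto simp: fixpts_def)
  define z where "z = s \<otimes> t \<otimes> s"
  have zc: "z \<in> carrier G" using sc tc by (simp add: z_def)
  define Y where "Y = inv (q z)"
  have Yc: "Y \<in> carrier G" using zc by (simp add: Y_def)
  define u where "u = s \<otimes> s"
  define u' where "u' = s' \<otimes> s'"
  have u: "u \<in> fixpts G q" using s sc by (simp add: u_def fixpts_def)
  have u': "u' \<in> fixpts G q" using s' sc' by (simp add: u'_def fixpts_def)
  have uc: "u \<in> carrier G" and uc': "u' \<in> carrier G" using u u' by (auto simp: fixpts_def)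
  have iu': "inv u' \<in> fixpts G q" using u' uc' by (simp add: fixpts_def)
  have z1: "z = u \<otimes> Y \<otimes> u" using sts_aux[OF s t] by (simp add: z_def Y_def u_def)
  have z2: "z = u' \<otimes> Y \<otimes> u'" using sts_aux[OF s' t'] e by (simp add: z_def Y_def u'_def)
  have Ye: "Y = inv u' \<otimes> z \<otimes> inv u'" using z2 uc' Yc by (simp add: m_assoc)
  define w where "w = u \<otimes> inv u'"
  have wc: "w \<in> carrier G" using uc uc' by (simp add: w_def)
  have cm: "inv u' \<otimes> u = w" using q_comm[OF iu' u] by (simp add: w_def)
  have "z = u \<otimes> inv u' \<otimes> z \<otimes> (inv u' \<otimes> u)" using z1 Ye uc uc' zc by (simp add: m_assoc)
  then have "w \<otimes> z \<otimes> w = z" using cm by (simp add: w_def)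
  then have "w = \<one>" using wXw wc zc by blast
  then have "u \<otimes> inv u' \<otimes> u' = u'" using uc uc' by (simp add: w_def)
  then have "u = u'" using uc uc' by (simp add: m_assoc)
  then show ?thesis using sq_inj[OF sc sc'] unfolding u_def u'_def by blast
qed

lemma star_spec:
  assumes a: "a \<in> fixpts G p" and b: "b \<in> fixpts G r"
  shows "star G (fixpts G q) (fixpts G r) a b \<in> fixpts G q \<and>
         (\<exists>t \<in> fixpts G r. inv a \<otimes> b \<otimes> a = star G (fixpts G q) (fixpts G r) a b \<otimes> t \<otimes> star G (fixpts G q) (fixpts G r) a b)"
proof -
  have ac: "a \<in> carrier G" and bc: "b \<in> carrier G" using a b by (auto simp: fixpts_def)
  define z where "z = inv a \<otimes> b \<otimes> a"
  have zc: "z \<in> carrier G" using ac bc by (simp add: z_def)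
  have pb: "p b = inv b" using inverts[OF b] .
  have pz: "p z = inv z" using a ac bc pb by (simp add: z_def fixpts_def inv_mult_group m_assoc)
  obtain s t where st: "s \<in> fixpts G q" "t \<in> fixpts G r" "z = s \<otimes> t \<otimes> s" using sts_exists[OF zc pz subgroup_self zc] Q.hom_closed by blast
  have ex1: "\<exists>!s. \<exists>t. s \<in> fixpts G q \<and> t \<in> fixpts G r \<and> z = s \<otimes> t \<otimes> s"
    using st sts_unique by blast
  have "\<exists>t. star G (fixpts G q) (fixpts G r) a b \<in> fixpts G q \<and> t \<in> fixpts G r \<and>
            z = star G (fixpts G q) (fixpts G r) a b \<otimes> t \<otimes> star G (fixpts G q) (fixpts G r) a b"
    unfolding star_def z_def[symmetric] by (rule theI'[OF ex1])
  then show ?thesis by (auto simp: z_def)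
qed

end



definition cm :: "('a, 'b) monoid_scheme \<Rightarrow> 'a \<Rightarrow> 'a \<Rightarrow> 'a" where
  "cm G x y = x \<otimes>\<^bsub>G\<^esub> y \<otimes>\<^bsub>G\<^esub> inv\<^bsub>G\<^esub> x \<otimes>\<^bsub>G\<^esub> inv\<^bsub>G\<^esub> y"

context group begin

lemma lc_0: "lower_central G 0 = carrier G" by (simp add: lower_central_def)

lemma lc_Suc: "lower_central G (Suc n) = generate G {cm G h g | h g. h \<in> lower_central G n \<and> g \<in> carrier G}"
proof -
  have "(\<Union>h \<in> lower_central G n. \<Union>g \<in> carrier G. { h \<otimes> g \<otimes> inv h \<otimes> inv g }) =
        {cm G h g | h g. h \<in> lower_central G n \<and> g \<in> carrier G}" by (auto simp: cm_def)
  then show ?thesis by (simp add: lower_central_def)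
qed

lemma cm_closed [simp]: "x \<in> carrier G \<Longrightarrow> y \<in> carrier G \<Longrightarrow> cm G x y \<in> carrier G"
  by (simp add: cm_def)

lemma lc_normal: "lower_central G n \<lhd> G"
proof (induction n)
  case 0 then show ?case by (simp add: lc_0 normal_self)
next
  case (Suc n)
  interpret Nn: normal "lower_central G n" G using Suc .
  have sub: "{cm G h g | h g. h \<in> lower_central G n \<and> g \<in> carrier G} \<subseteq> carrier G"
    using Nn.subset by auto
  show ?case unfolding lc_Suc
  proof (rule normal_generateI[OF sub])
    fix c x assume c: "c \<in> {cm G h g | h g. h \<in> lower_central G n \<and> g \<in> carrier G}" and x: "x \<in> carrier G"
    then obtain h g where hg: "h \<in> lower_central G n" "g \<in> carrier G" "c = cm G h g" by blast
    have hc: "h \<in> carrier G" using hg Nn.subset by auto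
    have "x \<otimes> c \<otimes> inv x = cm G (x \<otimes> h \<otimes> inv x) (x \<otimes> g \<otimes> inv x)"
      using hg hc x by (simp add: cm_def m_assoc inv_mult_group)
    moreover have "x \<otimes> h \<otimes> inv x \<in> lower_central G n" using Nn.inv_op_closed2 x hg by simp
    ultimately show "x \<otimes> c \<otimes> inv x \<in> {cm G h g | h g. h \<in> lower_central G n \<and> g \<in> carrier G}"
      using x hg hc by auto
  qed
qed

lemma lc_sub: "subgroup (lower_central G n) G" using lc_normal normal_imp_subgroup by blast

lemma lc_carrier: "x \<in> lower_central G n \<Longrightarrow> x \<in> carrier G"
  using subgroup.mem_carrier[OF lc_sub] by blast

lemma lc_gen: "h \<in> lower_central G n \<Longrightarrow> g \<in> carrier G \<Longrightarrow> cm G h g \<in> lower_central G (Suc n)"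
  unfolding lc_Suc by (rule generate.incl) blast

lemma lc_dec: "lower_central G (Suc n) \<subseteq> lower_central G n"
proof -
  interpret Nn: normal "lower_central G n" G using lc_normal .
  show ?thesis unfolding lc_Suc
  proof (rule generate_subgroup_incl[OF _ lc_sub])
    show "{cm G h g | h g. h \<in> lower_central G n \<and> g \<in> carrier G} \<subseteq> lower_central G n"
    proof
      fix c assume "c \<in> {cm G h g | h g. h \<in> lower_central G n \<and> g \<in> carrier G}"
      then obtain h g where hg: "h \<in> lower_central G n" "g \<in> carrier G" "c = cm G h g" by blast
      have hc: "h \<in> carrier G" using hg Nn.subset by auto
      have "g \<otimes> inv h \<otimes> inv g \<in> lower_central G n"
        using Nn.inv_op_closed2 hg(2) Nn.m_inv_closed[OF hg(1)] by simp
      then have "h \<otimes> (g \<otimes> inv h \<otimes> inv g) \<in> lower_central G n" using hg(1) Nn.m_closed by blast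
      then show "c \<in> lower_central G n" using hg hc by (simp add: cm_def m_assoc)
    qed
  qed
qed

lemma lc_antimono: "k \<le> n \<Longrightarrow> lower_central G n \<subseteq> lower_central G k"
  by (induction n rule: dec_induct) (use lc_dec in auto)

lemma lc_hom: assumes f: "f \<in> hom G G" shows "x \<in> lower_central G n \<Longrightarrow> f x \<in> lower_central G n"
proof (induction n arbitrary: x)
  case 0 then show ?case using f by (auto simp: lc_0 hom_def)
next
  case (Suc n)
  interpret F: group_hom G G f using hom_gh[OF f] .
  from Suc.prems show ?case unfolding lc_Suc
  proof (induction rule: generate.induct)
    case one then show ?case by (simp add: generate.one)
  next
    case (incl c)
    then obtain h g where hg: "h \<in> lower_central G n" "g \<in> carrier G" "c = cm G h g" by blast
    have hc: "h \<in> carrier G" using hg lc_carrier by auto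
    have "f c = cm G (f h) (f g)" using hg hc by (simp add: cm_def)
    moreover have "f g \<in> carrier G" using hg by simp
    ultimately show ?case using Suc.IH[OF hg(1)] hg by (intro generate.incl) blast
  next
    case (inv c)
    then obtain h g where hg: "h \<in> lower_central G n" "g \<in> carrier G" "c = cm G h g" by blast
    have hc: "h \<in> carrier G" using hg lc_carrier by auto
    have "f (inv c) = inv (cm G (f h) (f g))" using hg hc by (simp add: cm_def)
    moreover have fg: "f g \<in> carrier G" using hg by simp
    have "cm G (f h) (f g) \<in> {cm G h g | h g. h \<in> lower_central G n \<and> g \<in> carrier G}"
      using Suc.IH[OF hg(1)] fg by blast
    then have "inv (cm G (f h) (f g)) \<in> generate G {cm G h g | h g. h \<in> lower_central G n \<and> g \<in> carrier G}"
      by (rule generate.inv)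
    with \<open>f (inv c) = inv (cm G (f h) (f g))\<close> show ?case by simp
  next
    case (eng a b)
    have "a \<in> carrier G" "b \<in> carrier G"
      using eng.hyps lc_carrier unfolding lc_Suc[symmetric] by auto
    then show ?case using eng.IH by (simp add: generate.eng)
  qed
qed

lemma lc_1: "lower_central G (Suc 0) = derived G (carrier G)"
proof -
  have "{cm G h g | h g. h \<in> carrier G \<and> g \<in> carrier G} = derived_set G (carrier G)" by (auto simp: cm_def)
  then show ?thesis by (simp add: lc_Suc lc_0 derived_def)
qed

end



declare mult_FactGroup[simp del] one_FactGroup[simp del]

context group begin

lemma wz_lemma: assumes w: "w \<in> carrier G" and z: "z \<in> carrier G" and e: "w \<otimes> z \<otimes> w = z"
  and zz: "z = (z \<otimes> z) [^] (k::nat)"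
  shows "w \<otimes> w = \<one>"
proof -
  have e1: "z \<otimes> w = inv w \<otimes> z"
  proof -
    have "inv w \<otimes> (w \<otimes> z \<otimes> w) = inv w \<otimes> z" using e by simp
    then show ?thesis using w z by (simp add: m_assoc)
  qed
  have e2: "w \<otimes> z = z \<otimes> inv w"
  proof -
    have "(w \<otimes> z \<otimes> w) \<otimes> inv w = z \<otimes> inv w" using e by simp
    then show ?thesis using w z by (simp add: m_assoc)
  qed
  have c: "w \<otimes> (z \<otimes> z) = (z \<otimes> z) \<otimes> w"
  proof -
    have "(z \<otimes> z) \<otimes> w = z \<otimes> (inv w \<otimes> z)" using e1 w z by (simp add: m_assoc)
    also have "\<dots> = (z \<otimes> inv w) \<otimes> z" using w z by (simp add: m_assoc)
    also have "\<dots> = w \<otimes> (z \<otimes> z)" by (subst e2[symmetric]) (use w z in \<open>simp_all add: m_assoc\<close>)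
    finally show ?thesis by simp
  qed
  have "(z \<otimes> z) [^] k \<otimes> w = w \<otimes> (z \<otimes> z) [^] k"
    using group_commutes_pow[of "z \<otimes> z" w k] c w z by simp
  then have "z \<otimes> w = w \<otimes> z" using zz by simp
  then have "inv w \<otimes> z = w \<otimes> z" using e1 by simp
  then have "inv w = w" using w z by simp
  then show ?thesis using l_inv[OF w] by simp
qed

lemma comm_of_cm: "x \<in> carrier G \<Longrightarrow> y \<in> carrier G \<Longrightarrow> cm G x y = \<one> \<Longrightarrow> x \<otimes> y = y \<otimes> x"
proof -
  assume x: "x \<in> carrier G" and y: "y \<in> carrier G" and c: "cm G x y = \<one>"
  have "cm G x y \<otimes> (y \<otimes> x) = x \<otimes> y" using x y by (simp add: cm_def m_assoc)
  then show ?thesis using c x y by simp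
qed

lemma modQ: "N \<lhd> G \<Longrightarrow> group (G Mod N)" by (rule normal.factorgroup_is_group)

lemma modH: "N \<lhd> G \<Longrightarrow> group_hom G (G Mod N) (\<lambda>x. N #> x)"
  by (simp add: group_hom_def group_hom_axioms_def is_group modQ normal.r_coset_hom_Mod)

lemma mod_one: assumes N: "N \<lhd> G" and x: "x \<in> carrier G"
  shows "(N #> x = \<one>\<^bsub>G Mod N\<^esub>) \<longleftrightarrow> x \<in> N"
proof -
  have sN: "subgroup N G" using N normal_imp_subgroup by blast
  show ?thesis
  proof
    assume "N #> x = \<one>\<^bsub>G Mod N\<^esub>"
    then have "N #> x = N" by (simp add: one_FactGroup)
    then show "x \<in> N" using rcos_self[OF x sN] by simp
  next
    assume "x \<in> N" then show "N #> x = \<one>\<^bsub>G Mod N\<^esub>" using subgroup.rcos_const[OF sN is_group] by (simp add: one_FactGroup)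
  qed
qed

lemma mod_eq: assumes N: "N \<lhd> G" and x: "x \<in> carrier G" and y: "y \<in> carrier G"
  shows "(N #> x = N #> y) \<longleftrightarrow> x \<otimes> inv y \<in> N"
proof -
  interpret Q: group "G Mod N" using modQ[OF N] .
  interpret H: group_hom G "G Mod N" "\<lambda>x. N #> x" using modH[OF N] .
  have e1: "N #> (x \<otimes> inv y) = (N #> x) \<otimes>\<^bsub>G Mod N\<^esub> inv\<^bsub>G Mod N\<^esub> (N #> y)"
    using x y by simp
  have e2: "(N #> x = N #> y) \<longleftrightarrow> (N #> x) \<otimes>\<^bsub>G Mod N\<^esub> inv\<^bsub>G Mod N\<^esub> (N #> y) = \<one>\<^bsub>G Mod N\<^esub>"
    using x y by (metis H.hom_closed Q.inv_closed Q.inv_equality Q.inv_inv Q.r_inv)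
  have e3: "(N #> (x \<otimes> inv y) = \<one>\<^bsub>G Mod N\<^esub>) \<longleftrightarrow> x \<otimes> inv y \<in> N"
    using mod_one[OF N m_closed[OF x inv_closed[OF y]]] .
  show ?thesis using e2 e3[unfolded e1] by simp
qed

end

context fg begin

interpretation P: group_hom G G p using hom_gh[OF hp] .
interpretation Q: group_hom G G q using hom_gh[OF hq] .
interpretation R: group_hom G G r using hom_gh[OF hr] .

lemma star_in_normal:
  assumes N: "N \<lhd> G" and a: "a \<in> fixpts G p" and b: "b \<in> fixpts G r" and ab: "cm G a b \<in> N"
  shows "star G (fixpts G q) (fixpts G r) a b \<in> N"
proof -
  interpret K: group "G Mod N" using modQ[OF N] .
  interpret H: group_hom G "G Mod N" "\<lambda>x. N #> x" using modH[OF N] .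
  have sN: "subgroup N G" using N normal_imp_subgroup by blast
  have ac: "a \<in> carrier G" and bc: "b \<in> carrier G" using a b by (auto simp: fixpts_def)
  define s where "s = star G (fixpts G q) (fixpts G r) a b"
  obtain t where s: "s \<in> fixpts G q" and t: "t \<in> fixpts G r" and zst: "inv a \<otimes> b \<otimes> a = s \<otimes> t \<otimes> s"
    using star_spec[OF a b] unfolding s_def[symmetric] by blast
  have sc: "s \<in> carrier G" using s by (simp add: fixpts_def)
  define Y where "Y = a \<otimes> b \<otimes> inv a"
  have Yc: "Y \<in> carrier G" using ac bc by (simp add: Y_def)
  have qa: "q a = inv a" using p_inv_q a fg.inverts[OF perm_qpr] fg.inverts[OF fg.perm_prq[OF perm_qpr]] by blast
  have qb: "q b = inv b" using q_inv_r[OF b] .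
  have "inv (q (inv a \<otimes> b \<otimes> a)) = Y" using ac bc qa qb by (simp add: Y_def inv_mult_group m_assoc)
  then have zuY: "inv a \<otimes> b \<otimes> a = (s \<otimes> s) \<otimes> Y \<otimes> (s \<otimes> s)" using sts_aux[OF s t] zst by simp
  have ha: "N #> a \<in> carrier (G Mod N)" and hb: "N #> b \<in> carrier (G Mod N)" using ac bc by auto
  have cab: "(N #> a) \<otimes>\<^bsub>G Mod N\<^esub> (N #> b) = (N #> b) \<otimes>\<^bsub>G Mod N\<^esub> (N #> a)"
  proof -
    have "N #> cm G a b = \<one>\<^bsub>G Mod N\<^esub>" using mod_one[OF N] ab ac bc by simp
    then have "cm (G Mod N) (N #> a) (N #> b) = \<one>\<^bsub>G Mod N\<^esub>" using ac bc by (simp add: cm_def)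
    then show ?thesis using K.comm_of_cm[OF ha hb] by simp
  qed
  have hz: "N #> (inv a \<otimes> b \<otimes> a) = N #> b"
  proof -
    have "N #> (inv a \<otimes> b \<otimes> a) = inv\<^bsub>G Mod N\<^esub> (N #> a) \<otimes>\<^bsub>G Mod N\<^esub> ((N #> b) \<otimes>\<^bsub>G Mod N\<^esub> (N #> a))"
      using ac bc by (simp add: K.m_assoc)
    also have "\<dots> = N #> b" using cab[symmetric] ha hb by simp
    finally show ?thesis .
  qed
  have hY: "N #> Y = N #> b"
  proof -
    have "N #> Y = ((N #> a) \<otimes>\<^bsub>G Mod N\<^esub> (N #> b)) \<otimes>\<^bsub>G Mod N\<^esub> inv\<^bsub>G Mod N\<^esub> (N #> a)"
      using ac bc by (simp add: Y_def)
    also have "\<dots> = N #> b" using cab ha hb by (simp add: K.m_assoc)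
    finally show ?thesis .
  qed
  have e: "(N #> (s \<otimes> s)) \<otimes>\<^bsub>G Mod N\<^esub> (N #> Y) \<otimes>\<^bsub>G Mod N\<^esub> (N #> (s \<otimes> s)) = N #> Y"
  proof -
    have "N #> ((s \<otimes> s) \<otimes> Y \<otimes> (s \<otimes> s)) = N #> Y" using zuY hz hY by simp
    then show ?thesis using sc Yc by simp
  qed
  have YY: "N #> Y = ((N #> Y) \<otimes>\<^bsub>G Mod N\<^esub> (N #> Y)) [^]\<^bsub>G Mod N\<^esub> m"
  proof -
    have "N #> Y = N #> ((Y \<otimes> Y) [^] m)" using sq_pow_m[OF Yc] by simp
    then show ?thesis using Yc by (simp add: H.hom_nat_pow)
  qed
  have "(N #> (s \<otimes> s)) \<otimes>\<^bsub>G Mod N\<^esub> (N #> (s \<otimes> s)) = \<one>\<^bsub>G Mod N\<^esub>"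
    using K.wz_lemma[OF _ _ e YY] sc Yc by simp
  then have "N #> ((s \<otimes> s) \<otimes> (s \<otimes> s)) = \<one>\<^bsub>G Mod N\<^esub>" using sc by simp
  then have "(s \<otimes> s) \<otimes> (s \<otimes> s) \<in> N" using mod_one[OF N, of "(s \<otimes> s) \<otimes> (s \<otimes> s)"] sc by blast
  then have "s \<otimes> s \<in> N" using sq_in_sub[OF sN, of "s \<otimes> s"] sc by blast
  then have "s \<in> N" using sq_in_sub[OF sN, of s] sc by blast
  then show ?thesis by (simp add: s_def)
qed

end



context fg begin

interpretation P: group_hom G G p using hom_gh[OF hp] .
interpretation Q: group_hom G G q using hom_gh[OF hq] .
interpretation R: group_hom G G r using hom_gh[OF hr] .

lemma q_inv_p: "y \<in> fixpts G p \<Longrightarrow> q y = inv y" using fg.inverts[OF fg.perm_prq[OF perm_qpr]] .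
lemma p_comm: "x \<in> fixpts G p \<Longrightarrow> y \<in> fixpts G p \<Longrightarrow> x \<otimes> y = y \<otimes> x" using fg.fix_comm[OF perm_rqp] .

lemma decomp:
  assumes H: "subgroup H G" and pH: "\<And>x. x \<in> H \<Longrightarrow> p x \<in> H" and qH: "\<And>x. x \<in> H \<Longrightarrow> q x \<in> H"
  and x: "x \<in> H"
  shows "\<exists>c s t. c \<in> fixpts G p \<and> c \<in> H \<and> s \<in> fixpts G q \<and> s \<in> H \<and> t \<in> fixpts G r \<and> t \<in> H
     \<and> x = c \<otimes> (s \<otimes> t \<otimes> s)"
proof -
  have xc: "x \<in> carrier G" using subgroup.mem_carrier[OF H x] .
  define z0 where "z0 = inv (p x) \<otimes> x"
  have z0c: "z0 \<in> carrier G" using xc by (simp add: z0_def)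
  have pz0: "p z0 = inv z0" using xc by (simp add: z0_def pp inv_mult_group)
  define z where "z = z0 [^] m"
  have zc: "z \<in> carrier G" using z0c by (simp add: z_def)
  have pz: "p z = inv z" using z0c pz0 by (simp add: z_def P.hom_nat_pow nat_pow_inv)
  have zz: "z \<otimes> z = z0" using pow_m_sq[OF z0c] by (simp add: z_def)
  define c where "c = x \<otimes> inv z"
  have cc: "c \<in> carrier G" using xc zc by (simp add: c_def)
  have xe: "x = p x \<otimes> (z \<otimes> z)" using zz xc by (simp add: z0_def)
  have pc: "p c = c"
  proof -
    have "p c = p x \<otimes> z" using xc zc pz by (simp add: c_def)
    also have "\<dots> = p x \<otimes> (z \<otimes> z) \<otimes> inv z" using xc zc by (simp add: m_assoc)
    also have "\<dots> = c" using xe by (simp add: c_def)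
    finally show ?thesis .
  qed
  have zH: "z \<in> H"
  proof -
    have "z0 \<in> H" using pH[OF x] x H by (simp add: z0_def subgroup.m_closed subgroup.m_inv_closed)
    then show ?thesis using H by (simp add: z_def sub_pow_closed)
  qed
  have cH: "c \<in> H" using x zH H by (simp add: c_def subgroup.m_closed subgroup.m_inv_closed)
  obtain s t where st: "s \<in> fixpts G q" "t \<in> fixpts G r" "z = s \<otimes> t \<otimes> s" "s \<in> H" "t \<in> H"
    using sts_exists[OF zc pz H zH qH] by blast
  have "x = c \<otimes> z" using xc zc by (simp add: c_def m_assoc)
  then show ?thesis using st cH pc cc by (auto simp: fixpts_def)
qed

end

locale lay = fg + fixes n :: nat
begin

abbreviation "LP \<equiv> lower_central G n"
abbreviation "LL \<equiv> lower_central G (Suc n)"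
abbreviation "LN \<equiv> lower_central G (Suc (Suc n))"
abbreviation "QQ \<equiv> G Mod LN"
abbreviation "hh x \<equiv> LN #> x"
abbreviation "Rq \<equiv> generate G {star G (fixpts G q) (fixpts G r) a b | a b. a \<in> fixpts G p \<and> b \<in> fixpts G r}"

definition "S = {w \<in> LL. \<exists>\<rho>\<in>Rq. hh (w \<otimes> q w) = hh \<rho>}"

lemma NN: "LN \<lhd> G" by (rule lc_normal)

interpretation K: group QQ using modQ[OF NN] .
interpretation H: group_hom G QQ hh using modH[OF NN] .
interpretation P: group_hom G G p using hom_gh[OF hp] .
interpretation Q: group_hom G G q using hom_gh[OF hq] .
interpretation R: group_hom G G r using hom_gh[OF hr] .

lemma hc [simp]: "x \<in> carrier G \<Longrightarrow> hh x \<in> carrier QQ" by simp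

lemma cent: assumes w: "w \<in> LL" and y: "y \<in> carrier G"
  shows "hh w \<otimes>\<^bsub>QQ\<^esub> hh y = hh y \<otimes>\<^bsub>QQ\<^esub> hh w"
proof -
  have wc: "w \<in> carrier G" using w lc_carrier by blast
  have "cm G w y \<in> LN" using lc_gen[OF w y] .
  then have "hh (cm G w y) = \<one>\<^bsub>QQ\<^esub>" using mod_one[OF NN] wc y by simp
  then have "cm QQ (hh w) (hh y) = \<one>\<^bsub>QQ\<^esub>" using wc y by (simp add: cm_def)
  then show ?thesis using K.comm_of_cm[OF hc[OF wc] hc[OF y]] by simp
qed


lemma LPc: "x \<in> LP \<Longrightarrow> x \<in> carrier G" using lc_carrier by blast
lemma LLc: "x \<in> LL \<Longrightarrow> x \<in> carrier G" using lc_carrier by blast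
lemma LL_sub: "subgroup LL G" by (rule lc_sub)
lemma LP_sub: "subgroup LP G" by (rule lc_sub)

lemma BL1: assumes x: "x \<in> LP" and x': "x' \<in> LP" and y: "y \<in> carrier G"
  shows "hh (cm G (x \<otimes> x') y) = hh (cm G x' y) \<otimes>\<^bsub>QQ\<^esub> hh (cm G x y)"
proof -
  have xc: "x \<in> carrier G" and xc': "x' \<in> carrier G" using x x' LPc by auto
  have c': "cm G x' y \<in> LL" using lc_gen[OF x' y] .
  have id1: "cm G (x \<otimes> x') y = x \<otimes> cm G x' y \<otimes> (y \<otimes> inv x \<otimes> inv y)"
    using xc xc' y by (simp add: cm_def m_assoc inv_mult_group)
  have id2: "cm G x y = x \<otimes> (y \<otimes> inv x \<otimes> inv y)" using xc y by (simp add: cm_def m_assoc)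
  have "hh (cm G (x \<otimes> x') y) = (hh x \<otimes>\<^bsub>QQ\<^esub> hh (cm G x' y)) \<otimes>\<^bsub>QQ\<^esub> hh (y \<otimes> inv x \<otimes> inv y)"
    using xc xc' y by (simp add: id1)
  also have "\<dots> = (hh (cm G x' y) \<otimes>\<^bsub>QQ\<^esub> hh x) \<otimes>\<^bsub>QQ\<^esub> hh (y \<otimes> inv x \<otimes> inv y)"
    using cent[OF c' xc] by simp
  also have "\<dots> = hh (cm G x' y) \<otimes>\<^bsub>QQ\<^esub> hh (cm G x y)"
    using xc xc' y by (simp add: id2 K.m_assoc)
  finally show ?thesis .
qed

lemma BL2: assumes x: "x \<in> LP" and y: "y \<in> carrier G" and y': "y' \<in> carrier G"
  shows "hh (cm G x (y \<otimes> y')) = hh (cm G x y') \<otimes>\<^bsub>QQ\<^esub> hh (cm G x y)"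
proof -
  have xc: "x \<in> carrier G" using x LPc by auto
  have c': "cm G x y' \<in> LL" using lc_gen[OF x y'] .
  have id1: "cm G x (y \<otimes> y') = (x \<otimes> y \<otimes> inv x) \<otimes> cm G x y' \<otimes> inv y"
    using xc y y' by (simp add: cm_def m_assoc inv_mult_group)
  have id2: "cm G x y = (x \<otimes> y \<otimes> inv x) \<otimes> inv y" using xc y by (simp add: cm_def m_assoc)
  have "hh (cm G x (y \<otimes> y')) = (hh (x \<otimes> y \<otimes> inv x) \<otimes>\<^bsub>QQ\<^esub> hh (cm G x y')) \<otimes>\<^bsub>QQ\<^esub> hh (inv y)"
    using xc y y' by (simp only: id1 H.hom_mult m_closed inv_closed cm_closed)
  also have "\<dots> = (hh (cm G x y') \<otimes>\<^bsub>QQ\<^esub> hh (x \<otimes> y \<otimes> inv x)) \<otimes>\<^bsub>QQ\<^esub> hh (inv y)"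
    using cent[OF c', of "x \<otimes> y \<otimes> inv x"] xc y by simp
  also have "\<dots> = hh (cm G x y') \<otimes>\<^bsub>QQ\<^esub> hh (cm G x y)"
    using xc y y' by (simp add: id2 K.m_assoc)
  finally show ?thesis .
qed

lemma cm_one1 [simp]: "y \<in> carrier G \<Longrightarrow> cm G \<one> y = \<one>" by (simp add: cm_def)
lemma cm_one2 [simp]: "x \<in> carrier G \<Longrightarrow> cm G x \<one> = \<one>" by (simp add: cm_def)

lemma inv1: assumes x: "x \<in> LP" and y: "y \<in> carrier G"
  shows "hh (cm G (inv x) y) = inv\<^bsub>QQ\<^esub> hh (cm G x y)"
proof -
  have xc: "x \<in> carrier G" using x LPc by auto
  have ix: "inv x \<in> LP" using subgroup.m_inv_closed[OF LP_sub x] .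
  have "hh (cm G (x \<otimes> inv x) y) = hh (cm G (inv x) y) \<otimes>\<^bsub>QQ\<^esub> hh (cm G x y)" using BL1[OF x ix y] .
  then have "hh (cm G (inv x) y) \<otimes>\<^bsub>QQ\<^esub> hh (cm G x y) = \<one>\<^bsub>QQ\<^esub>" using xc y by simp
  then show ?thesis using xc y by (metis K.inv_equality hc cm_closed inv_closed)
qed

lemma inv2: assumes x: "x \<in> LP" and y: "y \<in> carrier G"
  shows "hh (cm G x (inv y)) = inv\<^bsub>QQ\<^esub> hh (cm G x y)"
proof -
  have xc: "x \<in> carrier G" using x LPc by auto
  have "hh (cm G x (y \<otimes> inv y)) = hh (cm G x (inv y)) \<otimes>\<^bsub>QQ\<^esub> hh (cm G x y)" using BL2[OF x y inv_closed[OF y]] y by simp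
  then have "hh (cm G x (inv y)) \<otimes>\<^bsub>QQ\<^esub> hh (cm G x y) = \<one>\<^bsub>QQ\<^esub>" using xc y by simp
  then show ?thesis using xc y by (metis K.inv_equality hc cm_closed inv_closed)
qed

lemma gens_sub: "{star G (fixpts G q) (fixpts G r) a b | a b. a \<in> fixpts G p \<and> b \<in> fixpts G r} \<subseteq> fixpts G q"
  using star_spec by blast
lemma Rq_sub: "subgroup Rq G"
  by (rule generate_is_subgroup) (use gens_sub in \<open>auto simp: fixpts_def\<close>)
lemma Rq_fix: "Rq \<subseteq> fixpts G q"
  by (rule generate_subgroup_incl[OF gens_sub fixpts_subgroup[OF hq]])
lemma star_Rq: "a \<in> fixpts G p \<Longrightarrow> b \<in> fixpts G r \<Longrightarrow> star G (fixpts G q) (fixpts G r) a b \<in> Rq"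
  by (rule generate.incl) blast
lemma Rqc: "x \<in> Rq \<Longrightarrow> x \<in> carrier G" using subgroup.mem_carrier[OF Rq_sub] .

lemma qL: "x \<in> LL \<Longrightarrow> q x \<in> LL" using lc_hom[OF hq] by blast
lemma qN: "x \<in> LN \<Longrightarrow> q x \<in> LN" using lc_hom[OF hq] by blast

lemma S_one: "\<one> \<in> S"
  unfolding S_def using subgroup.one_closed[OF LL_sub] generate.one by fastforce

lemma S_mult: assumes w1: "w1 \<in> S" and w2: "w2 \<in> S" shows "w1 \<otimes> w2 \<in> S"
proof -
  obtain r1 r2 where r1: "r1 \<in> Rq" "hh (w1 \<otimes> q w1) = hh r1" and r2: "r2 \<in> Rq" "hh (w2 \<otimes> q w2) = hh r2"
    and l1: "w1 \<in> LL" and l2: "w2 \<in> LL" using w1 w2 by (auto simp: S_def)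
  have c1: "w1 \<in> carrier G" and c2: "w2 \<in> carrier G" using l1 l2 LLc by auto
  have "hh ((w1 \<otimes> w2) \<otimes> q (w1 \<otimes> w2)) = hh w1 \<otimes>\<^bsub>QQ\<^esub> (hh w2 \<otimes>\<^bsub>QQ\<^esub> hh (q w1)) \<otimes>\<^bsub>QQ\<^esub> hh (q w2)"
    using c1 c2 by (simp add: K.m_assoc)
  also have "\<dots> = hh w1 \<otimes>\<^bsub>QQ\<^esub> (hh (q w1) \<otimes>\<^bsub>QQ\<^esub> hh w2) \<otimes>\<^bsub>QQ\<^esub> hh (q w2)"
    using cent[OF l2, of "q w1"] c1 by simp
  also have "\<dots> = hh (w1 \<otimes> q w1) \<otimes>\<^bsub>QQ\<^esub> hh (w2 \<otimes> q w2)" using c1 c2 by (simp add: K.m_assoc)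
  also have "\<dots> = hh (r1 \<otimes> r2)" using r1 r2 Rqc by simp
  moreover have "w1 \<otimes> w2 \<in> LL" by (rule subgroup.m_closed[OF LL_sub l1 l2])
  moreover have "r1 \<otimes> r2 \<in> Rq" by (rule subgroup.m_closed[OF Rq_sub r1(1) r2(1)])
  ultimately show ?thesis unfolding S_def by blast
qed

lemma S_inv: assumes w: "w \<in> S" shows "inv w \<in> S"
proof -
  obtain r1 where r1: "r1 \<in> Rq" "hh (w \<otimes> q w) = hh r1" and l: "w \<in> LL" using w by (auto simp: S_def)
  have c: "w \<in> carrier G" using l LLc by auto
  have "hh (inv w \<otimes> q (inv w)) = inv\<^bsub>QQ\<^esub> (hh (q w) \<otimes>\<^bsub>QQ\<^esub> hh w)"
    using c by (simp add: K.inv_mult_group)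
  also have "\<dots> = inv\<^bsub>QQ\<^esub> (hh (w \<otimes> q w))" using cent[OF l, of "q w"] c by simp
  also have "\<dots> = hh (inv r1)" using r1 Rqc by simp
  moreover have "inv w \<in> LL" by (rule subgroup.m_inv_closed[OF LL_sub l])
  moreover have "inv r1 \<in> Rq" by (rule subgroup.m_inv_closed[OF Rq_sub r1(1)])
  ultimately show ?thesis unfolding S_def by blast
qed

lemma S_sat: assumes w: "w \<in> S" and w': "w' \<in> LL" and e: "hh w' = hh w" shows "w' \<in> S"
proof -
  obtain r1 where r1: "r1 \<in> Rq" "hh (w \<otimes> q w) = hh r1" and l: "w \<in> LL" using w by (auto simp: S_def)
  have c: "w \<in> carrier G" and c': "w' \<in> carrier G" using l w' LLc by auto
  have "w' \<otimes> inv w \<in> LN" using e mod_eq[OF NN c' c] by simp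
  then have "q (w' \<otimes> inv w) \<in> LN" by (rule qN)
  then have "q w' \<otimes> inv (q w) \<in> LN" using c c' by simp
  then have "hh (q w') = hh (q w)" using mod_eq[OF NN] c c' by simp
  then have "hh (w' \<otimes> q w') = hh r1" using r1 e c c' by simp
  then show ?thesis using w' r1 by (auto simp: S_def)
qed

lemma S_prod: assumes w1: "w1 \<in> S" and w2: "w2 \<in> S" and w: "w \<in> LL"
  and e: "hh w = hh w1 \<otimes>\<^bsub>QQ\<^esub> hh w2" shows "w \<in> S"
proof -
  have "w1 \<in> carrier G" "w2 \<in> carrier G" using w1 w2 LLc by (auto simp: S_def)
  then show ?thesis using S_sat[OF S_mult[OF w1 w2] w] e by simp
qed

end



context lay begin

interpretation K: group QQ using modQ[OF NN] .
interpretation H: group_hom G QQ hh using modH[OF NN] .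
interpretation P: group_hom G G p using hom_gh[OF hp] .
interpretation Q: group_hom G G q using hom_gh[OF hq] .
interpretation R: group_hom G G r using hom_gh[OF hr] .

lemma Rq_one: "\<one> \<in> Rq" by (rule generate.one)

lemma base_same: assumes x: "x \<in> carrier G" and y: "y \<in> carrier G" and c: "x \<otimes> y = y \<otimes> x"
  shows "cm G x y \<in> S"
proof -
  have "cm G x y = (y \<otimes> x) \<otimes> inv x \<otimes> inv y" using c by (simp add: cm_def)
  also have "\<dots> = \<one>" using x y by (simp add: m_assoc)
  finally show ?thesis using S_one by simp
qed

lemma base_q1: assumes x: "x \<in> LP" and qx: "q x = x" and y: "y \<in> carrier G" and qy: "q y = inv y"
  shows "cm G x y \<in> S"
proof -
  have xc: "x \<in> carrier G" using x LPc by auto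
  have wL: "cm G x y \<in> LL" using lc_gen[OF x y] .
  have "q (cm G x y) = cm G x (inv y)" using xc y qx qy by (simp add: cm_def)
  then have "hh (q (cm G x y)) = inv\<^bsub>QQ\<^esub> hh (cm G x y)" using inv2[OF x y] by simp
  then have "hh (cm G x y \<otimes> q (cm G x y)) = hh \<one>" using xc y by simp
  then show ?thesis unfolding S_def using wL Rq_one by blast
qed

lemma base_q2: assumes x: "x \<in> LP" and qx: "q x = inv x" and y: "y \<in> carrier G" and qy: "q y = y"
  shows "cm G x y \<in> S"
proof -
  have xc: "x \<in> carrier G" using x LPc by auto
  have wL: "cm G x y \<in> LL" using lc_gen[OF x y] .
  have "q (cm G x y) = cm G (inv x) y" using xc y qx qy by (simp add: cm_def)
  then have "hh (q (cm G x y)) = inv\<^bsub>QQ\<^esub> hh (cm G x y)" using inv1[OF x y] by simp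
  then have "hh (cm G x y \<otimes> q (cm G x y)) = hh \<one>" using xc y by simp
  then show ?thesis unfolding S_def using wL Rq_one by blast
qed


lemma star_data:
  assumes a: "a \<in> fixpts G p" and b: "b \<in> fixpts G r"
  shows "\<exists>s. s \<in> Rq \<and> s \<in> fixpts G q \<and>
    inv a \<otimes> b \<otimes> a = (s \<otimes> s) \<otimes> (a \<otimes> b \<otimes> inv a) \<otimes> (s \<otimes> s) \<and>
    (cm G a b \<in> LL \<longrightarrow> s \<in> LL)"
proof -
  have ac: "a \<in> carrier G" and bc: "b \<in> carrier G" using a b by (auto simp: fixpts_def)
  define s where "s = star G (fixpts G q) (fixpts G r) a b"
  obtain t where s: "s \<in> fixpts G q" and t: "t \<in> fixpts G r" and zst: "inv a \<otimes> b \<otimes> a = s \<otimes> t \<otimes> s"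
    using star_spec[OF a b] unfolding s_def[symmetric] by blast
  have qa: "q a = inv a" using q_inv_p[OF a] .
  have qb: "q b = inv b" using q_inv_r[OF b] .
  have "inv (q (inv a \<otimes> b \<otimes> a)) = a \<otimes> b \<otimes> inv a" using ac bc qa qb by (simp add: inv_mult_group m_assoc)
  then have zuY: "inv a \<otimes> b \<otimes> a = (s \<otimes> s) \<otimes> (a \<otimes> b \<otimes> inv a) \<otimes> (s \<otimes> s)"
    using sts_aux[OF s t] zst by simp
  have "cm G a b \<in> LL \<longrightarrow> s \<in> LL" using star_in_normal[OF lc_normal a b] by (simp add: s_def)
  moreover have "s \<in> Rq" using star_Rq[OF a b] by (simp add: s_def)
  ultimately show ?thesis using s zuY by blast
qed

lemma base_pr: assumes x: "x \<in> LP" and a: "x \<in> fixpts G p" and b: "y \<in> fixpts G r"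
  shows "cm G x y \<in> S"
proof -
  have ac: "x \<in> carrier G" and bc: "y \<in> carrier G" using a b by (auto simp: fixpts_def)
  have wL: "cm G x y \<in> LL" using lc_gen[OF x bc] .
  obtain s where sR: "s \<in> Rq" and sq: "s \<in> fixpts G q"
    and zuY: "inv x \<otimes> y \<otimes> x = (s \<otimes> s) \<otimes> (x \<otimes> y \<otimes> inv x) \<otimes> (s \<otimes> s)" and sL: "s \<in> LL"
    using star_data[OF a b] wL by blast
  have sc: "s \<in> carrier G" using sR Rqc by auto
  define u where "u = s \<otimes> s"
  have uc: "u \<in> carrier G" using sc by (simp add: u_def)
  have uL: "u \<in> LL" using sL LL_sub by (simp add: u_def subgroup.m_closed)
  define w where "w = cm G x y"
  have wc: "w \<in> carrier G" using ac bc by (simp add: w_def)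
  have idz: "inv x \<otimes> y \<otimes> x = cm G (inv x) y \<otimes> y" using ac bc by (simp add: cm_def m_assoc)
  have idY: "x \<otimes> y \<otimes> inv x = w \<otimes> y" using ac bc by (simp add: cm_def w_def m_assoc)
  have hz: "hh (inv x \<otimes> y \<otimes> x) = inv\<^bsub>QQ\<^esub> hh w \<otimes>\<^bsub>QQ\<^esub> hh y"
    using inv1[OF x bc] ac bc by (simp only: idz H.hom_mult cm_closed inv_closed w_def)
  have "hh (inv x \<otimes> y \<otimes> x) = hh u \<otimes>\<^bsub>QQ\<^esub> (hh (w \<otimes> y) \<otimes>\<^bsub>QQ\<^esub> hh u)"
    using zuY idY uc wc bc by (simp add: u_def[symmetric] K.m_assoc)
  also have "\<dots> = hh u \<otimes>\<^bsub>QQ\<^esub> (hh u \<otimes>\<^bsub>QQ\<^esub> hh (w \<otimes> y))"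
    using cent[OF uL, of "w \<otimes> y"] wc bc by simp
  finally have "inv\<^bsub>QQ\<^esub> hh w \<otimes>\<^bsub>QQ\<^esub> hh y = (hh u \<otimes>\<^bsub>QQ\<^esub> hh u \<otimes>\<^bsub>QQ\<^esub> hh w) \<otimes>\<^bsub>QQ\<^esub> hh y"
    using hz uc wc bc by (simp add: K.m_assoc)
  then have e: "inv\<^bsub>QQ\<^esub> hh w = hh u \<otimes>\<^bsub>QQ\<^esub> hh u \<otimes>\<^bsub>QQ\<^esub> hh w" using uc wc bc by simp
  have cwu: "hh w \<otimes>\<^bsub>QQ\<^esub> hh (u \<otimes> u) = hh (u \<otimes> u) \<otimes>\<^bsub>QQ\<^esub> hh w"
    using cent[OF wL, of "u \<otimes> u"] uc by (simp add: w_def)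
  have "hh w \<otimes>\<^bsub>QQ\<^esub> hh w \<otimes>\<^bsub>QQ\<^esub> hh (u \<otimes> u) = hh w \<otimes>\<^bsub>QQ\<^esub> (hh (u \<otimes> u) \<otimes>\<^bsub>QQ\<^esub> hh w)"
    using cwu uc wc by (simp add: K.m_assoc)
  also have "\<dots> = hh w \<otimes>\<^bsub>QQ\<^esub> inv\<^bsub>QQ\<^esub> hh w" using e uc wc by (simp add: K.m_assoc)
  also have "\<dots> = \<one>\<^bsub>QQ\<^esub>" using wc by simp
  finally have ww: "hh w \<otimes>\<^bsub>QQ\<^esub> hh w = hh (inv (u \<otimes> u))"
    using uc wc by (metis K.inv_equality H.hom_closed H.hom_inv K.m_closed m_closed)
  have qa: "q x = inv x" using q_inv_p[OF a] .
  have qb: "q y = inv y" using q_inv_r[OF b] .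
  have "q w = cm G (inv x) (inv y)" using ac bc qa qb by (simp add: w_def cm_def)
  then have "hh (q w) = inv\<^bsub>QQ\<^esub> (inv\<^bsub>QQ\<^esub> hh w)"
    using inv1[OF x inv_closed[OF bc]] inv2[OF x bc] by (simp add: w_def)
  then have "hh (w \<otimes> q w) = hh (inv (u \<otimes> u))" using ww wc by simp
  moreover have "inv (u \<otimes> u) \<in> Rq" using sR Rq_sub
    by (simp add: u_def subgroup.m_closed subgroup.m_inv_closed)
  ultimately show ?thesis unfolding S_def w_def using wL by blast
qed


lemma base_rp: assumes x: "x \<in> LP" and b: "x \<in> fixpts G r" and a: "y \<in> fixpts G p"
  shows "cm G x y \<in> S"
proof -
  have bc: "x \<in> carrier G" and ac: "y \<in> carrier G" using a b by (auto simp: fixpts_def)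
  define w where "w = cm G x y"
  have wc: "w \<in> carrier G" using ac bc by (simp add: w_def)
  have wL: "w \<in> LL" using lc_gen[OF x ac] by (simp add: w_def)
  have cab: "cm G y x = inv w" using ac bc by (simp add: cm_def w_def inv_mult_group m_assoc)
  have cabL: "cm G y x \<in> LL" using cab wL LL_sub by (simp add: subgroup.m_inv_closed)
  obtain s where sR: "s \<in> Rq" and sq: "s \<in> fixpts G q"
    and zuY: "inv y \<otimes> x \<otimes> y = (s \<otimes> s) \<otimes> (y \<otimes> x \<otimes> inv y) \<otimes> (s \<otimes> s)" and sL: "s \<in> LL"
    using star_data[OF a b] cabL by blast
  have sc: "s \<in> carrier G" using sR Rqc by auto
  define u where "u = s \<otimes> s"
  have uc: "u \<in> carrier G" using sc by (simp add: u_def)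
  have uL: "u \<in> LL" using sL LL_sub by (simp add: u_def subgroup.m_closed)
  have idz: "inv y \<otimes> x \<otimes> y = x \<otimes> cm G (inv x) (inv y)" using ac bc by (simp add: cm_def m_assoc)
  have idY: "y \<otimes> x \<otimes> inv y = inv w \<otimes> x" using ac bc cab[symmetric] by (simp add: cm_def m_assoc)
  have hw2: "hh (cm G (inv x) (inv y)) = hh w"
    using inv1[OF x inv_closed[OF ac]] inv2[OF x ac] ac bc by (simp add: w_def)
  have hz: "hh (inv y \<otimes> x \<otimes> y) = hh w \<otimes>\<^bsub>QQ\<^esub> hh x"
  proof -
    have "hh (inv y \<otimes> x \<otimes> y) = hh x \<otimes>\<^bsub>QQ\<^esub> hh w" using hw2 ac bc by (simp only: idz H.hom_mult cm_closed inv_closed)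
    also have "\<dots> = hh w \<otimes>\<^bsub>QQ\<^esub> hh x" using cent[OF wL bc] by simp
    finally show ?thesis .
  qed
  have "hh (inv y \<otimes> x \<otimes> y) = hh u \<otimes>\<^bsub>QQ\<^esub> (hh (inv w \<otimes> x) \<otimes>\<^bsub>QQ\<^esub> hh u)"
    using zuY idY uc wc bc by (simp add: u_def[symmetric] K.m_assoc)
  also have "\<dots> = hh u \<otimes>\<^bsub>QQ\<^esub> (hh u \<otimes>\<^bsub>QQ\<^esub> hh (inv w \<otimes> x))"
    using cent[OF uL, of "inv w \<otimes> x"] wc bc by simp
  finally have "hh w \<otimes>\<^bsub>QQ\<^esub> hh x = (hh u \<otimes>\<^bsub>QQ\<^esub> hh u \<otimes>\<^bsub>QQ\<^esub> inv\<^bsub>QQ\<^esub> hh w) \<otimes>\<^bsub>QQ\<^esub> hh x"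
    using hz uc wc bc by (simp add: K.m_assoc)
  then have e: "hh w = hh u \<otimes>\<^bsub>QQ\<^esub> hh u \<otimes>\<^bsub>QQ\<^esub> inv\<^bsub>QQ\<^esub> hh w" using uc wc bc by simp
  have ww: "hh w \<otimes>\<^bsub>QQ\<^esub> hh w = hh (u \<otimes> u)"
  proof -
    have "hh w \<otimes>\<^bsub>QQ\<^esub> hh w = hh u \<otimes>\<^bsub>QQ\<^esub> hh u \<otimes>\<^bsub>QQ\<^esub> inv\<^bsub>QQ\<^esub> hh w \<otimes>\<^bsub>QQ\<^esub> hh w"
      using e by simp
    also have "\<dots> = hh (u \<otimes> u)" using uc wc by (simp add: K.m_assoc)
    finally show ?thesis .
  qed
  have qa: "q y = inv y" using q_inv_p[OF a] .
  have qb: "q x = inv x" using q_inv_r[OF b] .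
  have "q w = cm G (inv x) (inv y)" using ac bc qa qb by (simp add: w_def cm_def)
  then have "hh (w \<otimes> q w) = hh (u \<otimes> u)" using ww wc hw2 ac bc by simp
  moreover have "u \<otimes> u \<in> Rq" using sR Rq_sub
    by (simp add: u_def subgroup.m_closed)
  ultimately show ?thesis unfolding S_def w_def using wL by (auto simp: w_def)
qed


lemma E_mult: assumes x: "x \<in> LP" and y: "y \<in> carrier G" and y': "y' \<in> carrier G"
  and s1: "cm G x y \<in> S" and s2: "cm G x y' \<in> S" shows "cm G x (y \<otimes> y') \<in> S"
  using S_prod[OF s2 s1 lc_gen[OF x m_closed[OF y y']] BL2[OF x y y']] .

lemma D_mult: assumes x: "x \<in> LP" and x': "x' \<in> LP" and y: "y \<in> carrier G"
  and s1: "cm G x y \<in> S" and s2: "cm G x' y \<in> S" shows "cm G (x \<otimes> x') y \<in> S"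
  using S_prod[OF s2 s1 lc_gen[OF subgroup.m_closed[OF LP_sub x x'] y] BL1[OF x x' y]] .

lemma E_all: assumes x: "x \<in> LP"
  and hp': "\<And>y. y \<in> fixpts G p \<Longrightarrow> cm G x y \<in> S"
  and hq': "\<And>y. y \<in> fixpts G q \<Longrightarrow> cm G x y \<in> S"
  and hr': "\<And>y. y \<in> fixpts G r \<Longrightarrow> cm G x y \<in> S"
  and y: "y \<in> carrier G"
  shows "cm G x y \<in> S"
proof -
  obtain c s t where cst: "c \<in> fixpts G p" "s \<in> fixpts G q" "t \<in> fixpts G r" "y = c \<otimes> (s \<otimes> t \<otimes> s)"
    using decomp[OF subgroup_self _ _ y] by auto
  have cc: "c \<in> carrier G" and sc: "s \<in> carrier G" and tc: "t \<in> carrier G" using cst by (auto simp: fixpts_def)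
  have "cm G x (s \<otimes> t) \<in> S" using E_mult[OF x sc tc hq' hr'] cst by simp
  then have "cm G x (s \<otimes> t \<otimes> s) \<in> S" using E_mult[OF x _ sc _ hq'] cst sc tc by simp
  then have "cm G x (c \<otimes> (s \<otimes> t \<otimes> s)) \<in> S" using E_mult[OF x cc _ hp'] cst sc tc by simp
  then show ?thesis using cst by simp
qed

lemma D_all:
  assumes hp': "\<And>x y. x \<in> LP \<Longrightarrow> x \<in> fixpts G p \<Longrightarrow> y \<in> carrier G \<Longrightarrow> cm G x y \<in> S"
  and hq': "\<And>x y. x \<in> LP \<Longrightarrow> x \<in> fixpts G q \<Longrightarrow> y \<in> carrier G \<Longrightarrow> cm G x y \<in> S"
  and hr': "\<And>x y. x \<in> LP \<Longrightarrow> x \<in> fixpts G r \<Longrightarrow> y \<in> carrier G \<Longrightarrow> cm G x y \<in> S"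
  and x: "x \<in> LP" and y: "y \<in> carrier G"
  shows "cm G x y \<in> S"
proof -
  obtain c s t where cst: "c \<in> fixpts G p" "c \<in> LP" "s \<in> fixpts G q" "s \<in> LP" "t \<in> fixpts G r" "t \<in> LP"
     "x = c \<otimes> (s \<otimes> t \<otimes> s)"
    using decomp[OF LP_sub _ _ x] lc_hom[OF hp] lc_hom[OF hq] by blast
  have st: "s \<otimes> t \<in> LP" using cst LP_sub by (simp add: subgroup.m_closed)
  have sts: "s \<otimes> t \<otimes> s \<in> LP" using cst st LP_sub by (simp add: subgroup.m_closed)
  have "cm G (s \<otimes> t) y \<in> S" using D_mult[OF cst(4) cst(6) y hq' hr'] cst y by simp
  then have "cm G (s \<otimes> t \<otimes> s) y \<in> S" using D_mult[OF st cst(4) y _ hq'] cst y by simp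
  then have "cm G (c \<otimes> (s \<otimes> t \<otimes> s)) y \<in> S" using D_mult[OF cst(2) sts y hp'] cst y by simp
  then show ?thesis using cst by simp
qed

lemma gen_S: assumes x: "x \<in> LP" and y: "y \<in> carrier G" shows "cm G x y \<in> S"
proof (rule D_all[OF _ _ _ x y])
  fix x y assume x: "x \<in> LP" and xf: "x \<in> fixpts G p" and y: "y \<in> carrier G"
  have xc: "x \<in> carrier G" using xf by (simp add: fixpts_def)
  show "cm G x y \<in> S"
  proof (rule E_all[OF x _ _ _ y])
    fix y assume "y \<in> fixpts G p" then show "cm G x y \<in> S"
      using base_same p_comm xf xc by (simp add: fixpts_def)
  next
    fix y assume "y \<in> fixpts G q" then show "cm G x y \<in> S"
      using base_q2[OF x q_inv_p[OF xf]] by (simp add: fixpts_def)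
  next
    fix y assume "y \<in> fixpts G r" then show "cm G x y \<in> S" using base_pr[OF x xf] by simp
  qed
next
  fix x y assume x: "x \<in> LP" and xf: "x \<in> fixpts G q" and y: "y \<in> carrier G"
  have xc: "x \<in> carrier G" using xf by (simp add: fixpts_def)
  have qx: "q x = x" using xf by (simp add: fixpts_def)
  show "cm G x y \<in> S"
  proof (rule E_all[OF x _ _ _ y])
    fix y assume "y \<in> fixpts G p" then show "cm G x y \<in> S"
      using base_q1[OF x qx] q_inv_p by (simp add: fixpts_def)
  next
    fix y assume "y \<in> fixpts G q" then show "cm G x y \<in> S"
      using base_same q_comm xf xc by (simp add: fixpts_def)
  next
    fix y assume "y \<in> fixpts G r" then show "cm G x y \<in> S"
      using base_q1[OF x qx] q_inv_r by (simp add: fixpts_def)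
  qed
next
  fix x y assume x: "x \<in> LP" and xf: "x \<in> fixpts G r" and y: "y \<in> carrier G"
  have xc: "x \<in> carrier G" using xf by (simp add: fixpts_def)
  show "cm G x y \<in> S"
  proof (rule E_all[OF x _ _ _ y])
    fix y assume "y \<in> fixpts G p" then show "cm G x y \<in> S" using base_rp[OF x xf] by simp
  next
    fix y assume "y \<in> fixpts G q" then show "cm G x y \<in> S"
      using base_q2[OF x q_inv_r[OF xf]] by (simp add: fixpts_def)
  next
    fix y assume "y \<in> fixpts G r" then show "cm G x y \<in> S"
      using base_same fix_comm xf xc by (simp add: fixpts_def)
  qed
qed

lemma L_S: assumes w: "w \<in> LL" shows "w \<in> S"
  using w unfolding lc_Suc
proof (induction rule: generate.induct)
  case one then show ?case by (rule S_one)
next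
  case (incl h) then show ?case using gen_S by blast
next
  case (inv h) then show ?case using gen_S S_inv by blast
next
  case (eng a b) then show ?case using S_mult by blast
qed

lemma layer: assumes g: "g \<in> fixpts G q" and gL: "g \<in> LL"
  shows "\<exists>\<rho>\<in>Rq. inv \<rho> \<otimes> g \<in> LN"
proof -
  have gc: "g \<in> carrier G" using g by (simp add: fixpts_def)
  obtain r0 where r0: "r0 \<in> Rq" "hh (g \<otimes> q g) = hh r0" using L_S[OF gL] by (auto simp: S_def)
  have r0c: "r0 \<in> carrier G" using r0 Rqc by auto
  have qg: "q g = g" using g by (simp add: fixpts_def)
  have "hh g = hh ((g \<otimes> g) [^] m)" using sq_pow_m[OF gc] by simp
  also have "\<dots> = (hh (g \<otimes> g)) [^]\<^bsub>QQ\<^esub> m" using gc by (simp add: H.hom_nat_pow)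
  also have "\<dots> = (hh r0) [^]\<^bsub>QQ\<^esub> m" using r0 qg by simp
  also have "\<dots> = hh (r0 [^] m)" using r0c by (simp add: H.hom_nat_pow)
  finally have e: "hh g = hh (r0 [^] m)" .
  have rR: "r0 [^] m \<in> Rq" using sub_pow_closed[OF Rq_sub r0(1)] .
  have rc: "r0 [^] m \<in> carrier G" using r0c by simp
  have "hh (inv (r0 [^] m) \<otimes> g) = \<one>\<^bsub>QQ\<^esub>" using e rc gc by simp
  then have "inv (r0 [^] m) \<otimes> g \<in> LN" using mod_one[OF NN, of "inv (r0 [^] m) \<otimes> g"] rc gc by simp
  then show ?thesis using rR by blast
qed

end



context fg begin

lemma lay_inst: "lay G p q r" by (simp add: lay_def fg_axioms)

lemma main_q:
  assumes nil: "lower_central G c = {\<one>}"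
  shows "fixpts G q \<inter> derived G (carrier G) =
    generate G {star G (fixpts G q) (fixpts G r) a b | a b. a \<in> fixpts G p \<and> b \<in> fixpts G r}"
    (is "?A = ?R")
proof
  interpret L0: lay G p q r 0 by (rule lay_inst)
  have Rsub: "subgroup ?R G" by (rule L0.Rq_sub)
  have Rfix: "?R \<subseteq> fixpts G q" by (rule L0.Rq_fix)
  show "?A \<subseteq> ?R"
  proof
    fix g assume gA: "g \<in> ?A"
    have gq: "g \<in> fixpts G q" and g1: "g \<in> lower_central G (Suc 0)" using gA lc_1 by auto
    have gc: "g \<in> carrier G" using gq by (simp add: fixpts_def)
    have claim: "\<exists>\<rho>\<in>?R. inv \<rho> \<otimes> g \<in> lower_central G (Suc k)" for k
    proof (induction k)
      case 0
      show ?case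
      proof (rule bexI[of _ "\<one>"])
        show "inv \<one> \<otimes> g \<in> lower_central G (Suc 0)" using g1 gc by simp
        show "\<one> \<in> ?R" by (rule generate.one)
      qed
    next
      case (Suc k)
      then obtain \<rho> where \<rho>: "\<rho> \<in> ?R" "inv \<rho> \<otimes> g \<in> lower_central G (Suc k)" by blast
      have \<rho>c: "\<rho> \<in> carrier G" using subgroup.mem_carrier[OF Rsub \<rho>(1)] .
      have "inv \<rho> \<in> fixpts G q" using Rfix \<rho>(1) subgroup.m_inv_closed[OF fixpts_subgroup[OF hq]] by blast
      then have gq': "inv \<rho> \<otimes> g \<in> fixpts G q" using gq subgroup.m_closed[OF fixpts_subgroup[OF hq]] by blast
      interpret Lk: lay G p q r k by (rule lay_inst)
      obtain \<rho>' where \<rho>': "\<rho>' \<in> ?R" "inv \<rho>' \<otimes> (inv \<rho> \<otimes> g) \<in> lower_central G (Suc (Suc k))"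
        using Lk.layer[OF gq' \<rho>(2)] by blast
      have \<rho>c': "\<rho>' \<in> carrier G" using subgroup.mem_carrier[OF Rsub \<rho>'(1)] .
      have m: "\<rho> \<otimes> \<rho>' \<in> ?R" using subgroup.m_closed[OF Rsub \<rho>(1) \<rho>'(1)] .
      have e: "inv (\<rho> \<otimes> \<rho>') \<otimes> g = inv \<rho>' \<otimes> (inv \<rho> \<otimes> g)" using \<rho>c \<rho>c' gc by (simp add: inv_mult_group m_assoc)
      show ?case
      proof (rule bexI[OF _ m])
        show "inv (\<rho> \<otimes> \<rho>') \<otimes> g \<in> lower_central G (Suc (Suc k))" unfolding e by (rule \<rho>'(2))
      qed
    qed
    obtain \<rho> where \<rho>: "\<rho> \<in> ?R" "inv \<rho> \<otimes> g \<in> lower_central G (Suc c)" using claim by blast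
    have \<rho>c: "\<rho> \<in> carrier G" using subgroup.mem_carrier[OF Rsub \<rho>(1)] .
    have "inv \<rho> \<otimes> g \<in> lower_central G c" using \<rho>(2) lc_dec by blast
    then have "inv \<rho> \<otimes> g = \<one>" using nil by simp
    then have "g = \<rho>" using \<rho>c gc by (metis inv_equality inv_inv inv_closed)
    then show "g \<in> ?R" using \<rho>(1) by simp
  qed
next
  show "?R \<subseteq> ?A"
  proof -
    have Dn: "derived G (carrier G) \<lhd> G" using lc_normal[of "Suc 0"] lc_1 by simp
    have "?R \<subseteq> derived G (carrier G)"
    proof (rule generate_subgroup_incl)
      show "subgroup (derived G (carrier G)) G" using Dn normal_imp_subgroup by blast
      show "{star G (fixpts G q) (fixpts G r) a b | a b. a \<in> fixpts G p \<and> b \<in> fixpts G r} \<subseteq> derived G (carrier G)"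
      proof
        fix x assume "x \<in> {star G (fixpts G q) (fixpts G r) a b | a b. a \<in> fixpts G p \<and> b \<in> fixpts G r}"
        then obtain a b where ab: "a \<in> fixpts G p" "b \<in> fixpts G r" "x = star G (fixpts G q) (fixpts G r) a b" by blast
        have ac: "a \<in> carrier G" and bc: "b \<in> carrier G" using ab by (auto simp: fixpts_def)
        have "cm G a b \<in> derived G (carrier G)" using lc_gen[of a 0 b] ac bc lc_0 lc_1 by simp
        then show "x \<in> derived G (carrier G)" using star_in_normal[OF Dn ab(1) ab(2)] ab(3) by simp
      qed
    qed
    note this
    interpret L1: lay G p q r 0 by (rule lay_inst)
    show ?thesis using L1.Rq_fix \<open>?R \<subseteq> derived G (carrier G)\<close> by blast
  qed
qed

end

lemma fg_from:
  assumes grp: "group G" and fin: "finite (carrier G)"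
    and fga: "four_group_action G v1 v2 v3"
    and fx: "fixpts G v1 \<inter> fixpts G v2 \<inter> fixpts G v3 = {\<one>\<^bsub>G\<^esub>}"
  shows "fg G v1 v2 v3"
proof -
  interpret group G by (rule grp)
  have h1: "v1 \<in> hom G G" and h2: "v2 \<in> hom G G" and h3: "v3 \<in> hom G G"
    using fga by (auto simp: four_group_action_def iso_def)
  have cl1: "\<And>x. x \<in> carrier G \<Longrightarrow> v1 x \<in> carrier G" using h1 by (auto simp: hom_def)
  have cl2: "\<And>x. x \<in> carrier G \<Longrightarrow> v2 x \<in> carrier G" using h2 by (auto simp: hom_def)
  have i1: "\<And>x. x \<in> carrier G \<Longrightarrow> v1 (v1 x) = x" and i2: "\<And>x. x \<in> carrier G \<Longrightarrow> v2 (v2 x) = x"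
    and i3: "\<And>x. x \<in> carrier G \<Longrightarrow> v3 (v3 x) = x" and c12: "\<And>x. x \<in> carrier G \<Longrightarrow> v1 (v2 x) = v3 x"
    using fga by (auto simp: four_group_action_def)
  have c21: "v2 (v1 y) = v3 y" if y: "y \<in> carrier G" for y
  proof -
    have "v1 (v2 (v1 (v2 z))) = z" if z: "z \<in> carrier G" for z
      using i3[OF z] c12[OF z] c12[OF cl1[OF cl2[OF z]]] by (metis c12 cl1 cl2 z)
    then have "v2 (v1 (v2 z)) = v1 z" if z: "z \<in> carrier G" for z
      using z by (metis i1 cl1 cl2)
    then have "v2 (v1 (v2 (v2 y))) = v1 (v2 y)" using cl2[OF y] by blast
    then show ?thesis using i2[OF y] c12[OF y] by simp
  qed
  show ?thesis
  proof (unfold_locales)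
    show "finite (carrier G)" by (rule fin)
    show "v1 \<in> hom G G" "v2 \<in> hom G G" "v3 \<in> hom G G" by (fact h1, fact h2, fact h3)
  next
    fix x assume x: "x \<in> carrier G"
    show "v1 (v1 x) = x" "v2 (v2 x) = x" "v3 (v3 x) = x" "v1 (v2 x) = v3 x" "v2 (v1 x) = v3 x"
      using x i1 i2 i3 c12 c21 by auto
    show "v1 (v3 x) = v2 x" using x c12 i1 cl2 by (metis)
    show "v3 (v1 x) = v2 x" using x c21 i1 cl1 by (metis)
    show "v2 (v3 x) = v1 x" using x c21 i2 cl1 by (metis)
    show "v3 (v2 x) = v1 x" using x c12 i2 cl2 by (metis)
  next
    fix x assume x: "x \<in> carrier G" and "v1 x = x" "v2 x = x"
    then have "v3 x = x" using c12 by metis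
    then show "x = \<one>\<^bsub>G\<^esub>" using fx x \<open>v1 x = x\<close> \<open>v2 x = x\<close> by (auto simp: fixpts_def)
  qed
qed


theorem lemma4p7:
  fixes G :: "('a, 'b) monoid_scheme" and v1 v2 v3 :: "'a \<Rightarrow> 'a"
  assumes "nilpotent_group G" and "finite (carrier G)"
    and "four_group_action G v1 v2 v3"
    and "fixpts G v1 \<inter> fixpts G v2 \<inter> fixpts G v3 = {\<one>\<^bsub>G\<^esub>}"
  shows "(fixpts G v1 \<inter> derived G (carrier G) =
           generate G {star G (fixpts G v1) (fixpts G v3) a b | a b. a \<in> fixpts G v2 \<and> b \<in> fixpts G v3}) \<and>
         (fixpts G v2 \<inter> derived G (carrier G) =
           generate G {star G (fixpts G v2) (fixpts G v3) a b | a b. a \<in> fixpts G v1 \<and> b \<in> fixpts G v3}) \<and>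
         (fixpts G v3 \<inter> derived G (carrier G) =
           generate G {star G (fixpts G v3) (fixpts G v2) a b | a b. a \<in> fixpts G v1 \<and> b \<in> fixpts G v2})"
proof -
  have grp: "group G" using assms(1) by (simp add: nilpotent_group_def)
  obtain c where c: "lower_central G c = {\<one>\<^bsub>G\<^esub>}" using assms(1) by (auto simp: nilpotent_group_def)
  have F: "fg G v1 v2 v3" by (rule fg_from[OF grp assms(2) assms(3) assms(4)])
  show ?thesis
    using fg.main_q[OF fg.perm_qpr[OF F] c] fg.main_q[OF F c] fg.main_q[OF fg.perm_prq[OF F] c] by blast
qed

end
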